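(* Let $k=2^{\ell}$ with $\ell\ge2$ an integer and $q=4k$. Let $f\in\mathbb F_q[X,Y]$ be a local permutation polynomial whose permutation polynomial tuple consists of the $q$ elements of the group $G_3=\{b^ja^i:0\le j\le 2k-1,\ 0\le i\le 1\}$ (in some order), where $a$ and $b$ are as defined below. Then $f$ has a companion.
   Context: The elements of $\mathbb F_q$ are enumerated as $\mathbb F_q=\{c_0,\dots,c_{q-1}\}$; $\mathfrak S_q$ is the symmetric group of permutations of $\mathbb F_q$, composed right to left, written in cycle notation. $a=(c_0,c_1)(c_2,c_3)\cdots(c_{q-2},c_{q-1})$ and $b=D_1D_2$, where $D_1$ is the $2k$-cycle whose entries in order are: for $i=0,1,\dots,\frac{k-2}{2}$ the pair $c_{2i},c_{2i+2k+1}$; then $c_{k+1},c_{3k}$; then for $j=0,1,\dots,\frac{k-4}{2}$ the pair $c_{k+2j+2},c_{3k+2j+2}$; and $D_2$ is the $2k$-cycle whose entries in order are: for $j=0,1,\dots,\frac{k-4}{2}$ the pair $c_{3k-2-2j},c_{2k-1-2j}$; then $c_{2k},c_k$; then for $i=0,1,\dots,\frac{k-2}{2}$ the pair $c_{4k-1-2i},c_{k-1-2i}$. ($G_3$ is a subgroup of $\mathfrak S_q$ of order $q$ whose non-identity elements have no fixed points.) Every function $\mathbb F_q^2\to\mathbb F_q$ is identified with the unique polynomial in $\mathbb F_q[X,Y]$ of degree $<q$ in each variable representing it. $f$ is a local permutation polynomial (LPP) if $x\mapsto f(x,y_0)$ and $y\mapsto f(x_0,y)$ are permutations of $\mathbb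 F_q$ for all $x_0,y_0$. A permutation polynomial tuple is $(\beta_0,\dots,\beta_{q-1})\in\mathfrak S_q^q$ such that $\beta_i^{-1}\beta_j$ has no fixed point whenever $i\ne j$; LPPs $f$ correspond bijectively to such tuples via $f(x,\beta_i(x))=c_i$ for all $x$ and all $i$. Two LPPs $f,g$ are orthogonal (companions) if for every $(u,v)\in\mathbb F_q^2$ the system $f(X,Y)=u$, $g(X,Y)=v$ has exactly one solution in $\mathbb F_q^2$; a companion of $f$ is an LPP orthogonal to $f$. *)

theory Defs
  imports Main "HOL-Combinatorics.Cycles"
begin

text \<open>Index lists of the two 2k-cycles D1 and D2 (entries are indices into the
enumeration c of F_q).\<close>

definition D1_idx :: "nat \<Rightarrow> nat list" where
  "D1_idx k =
     concat (map (\<lambda>i. [2*i, 2*i + 2*k + 1]) [0..<k div 2])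
     @ [k + 1, 3*k]
     @ concat (map (\<lambda>j. [k + 2*j + 2, 3*k + 2*j + 2]) [0..<(k - 2) div 2])"

definition D2_idx :: "nat \<Rightarrow> nat list" where
  "D2_idx k =
     concat (map (\<lambda>j. [3*k - 2 - 2*j, 2*k - 1 - 2*j]) [0..<(k - 2) div 2])
     @ [2*k, k]
     @ concat (map (\<lambda>i. [4*k - 1 - 2*i, k - 1 - 2*i]) [0..<k div 2])"

definition perm_a :: "(nat \<Rightarrow> 'a) \<Rightarrow> nat \<Rightarrow> 'a \<Rightarrow> 'a" where
  "perm_a c q = foldr (\<lambda>m g. cycle_of_list [c (2*m), c (2*m+1)] \<circ> g) [0..<q div 2] id"

definition perm_b :: "(nat \<Rightarrow> 'a) \<Rightarrow> nat \<Rightarrow> 'a \<Rightarrow> 'a" where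
  "perm_b c k = cycle_of_list (map c (D1_idx k)) \<circ> cycle_of_list (map c (D2_idx k))"

definition G3 :: "(nat \<Rightarrow> 'a) \<Rightarrow> nat \<Rightarrow> ('a \<Rightarrow> 'a) set" where
  "G3 c k = {(perm_b c k ^^ j) \<circ> (perm_a c (4*k) ^^ i) | j i. j \<le> 2*k - 1 \<and> i \<le> 1}"

text \<open>Functions F_q^2 -> F_q (identified with reduced polynomials), curried.\<close>
definition is_LPP :: "('a \<Rightarrow> 'a \<Rightarrow> 'a) \<Rightarrow> bool" where
  "is_LPP f \<longleftrightarrow> (\<forall>y. bij (\<lambda>x. f x y)) \<and> (\<forall>x. bij (\<lambda>y. f x y))"

definition is_ppt :: "nat \<Rightarrow> ('a \<Rightarrow> 'a) list \<Rightarrow> bool" where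
  "is_ppt q \<beta> \<longleftrightarrow> length \<beta> = q \<and> (\<forall>i<q. bij (\<beta> ! i)) \<and>
     (\<forall>i<q. \<forall>j<q. i \<noteq> j \<longrightarrow> (\<forall>x. (inv (\<beta> ! i) \<circ> (\<beta> ! j)) x \<noteq> x))"

definition ppt_of :: "(nat \<Rightarrow> 'a) \<Rightarrow> nat \<Rightarrow> ('a \<Rightarrow> 'a \<Rightarrow> 'a) \<Rightarrow> ('a \<Rightarrow> 'a) list \<Rightarrow> bool" where
  "ppt_of c q f \<beta> \<longleftrightarrow> is_ppt q \<beta> \<and> (\<forall>i<q. \<forall>x. f x ((\<beta> ! i) x) = c i)"

definition orthogonal :: "('a \<Rightarrow> 'a \<Rightarrow> 'a) \<Rightarrow> ('a \<Rightarrow> 'a \<Rightarrow> 'a) \<Rightarrow> bool" where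
  "orthogonal f g \<longleftrightarrow> (\<forall>u v. \<exists>!p. f (fst p) (snd p) = u \<and> g (fst p) (snd p) = v)"

definition has_companion :: "('a \<Rightarrow> 'a \<Rightarrow> 'a) \<Rightarrow> bool" where
  "has_companion f \<longleftrightarrow> (\<exists>g. is_LPP g \<and> orthogonal f g)"

end

theory Submission
  imports Defs
begin


lemma finite_inj_bij:
  fixes h :: "'a::finite \<Rightarrow> 'a"
  assumes "inj h" shows "bij h"
  using assms finite_UNIV_inj_surj[OF _ assms] by (simp add: bij_def)

lemma abstract_companion:
  fixes f :: "'a::finite \<Rightarrow> 'a \<Rightarrow> 'a" and M :: "'g \<Rightarrow> 'a \<Rightarrow> 'a" and G :: "'g set"
    and mul :: "'g \<Rightarrow> 'g \<Rightarrow> 'g" and \<theta> :: "'g \<Rightarrow> 'g"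
  assumes LPP: "is_LPP f"
  and reg: "\<And>x. bij_betw (\<lambda>s. M s x) G UNIV"
  and injM: "\<And>s. s \<in> G \<Longrightarrow> inj (M s)"
  and cl: "\<And>s t. s \<in> G \<Longrightarrow> t \<in> G \<Longrightarrow> mul s t \<in> G \<and> M (mul s t) = M s \<circ> M t"
  and fval: "\<And>s x x'. s \<in> G \<Longrightarrow> f x (M s x) = f x' (M s x')"
  and thG: "\<And>h. h \<in> G \<Longrightarrow> \<theta> h \<in> G" and thinj: "inj_on \<theta> G"
  and orth: "\<And>h h' u. h\<in>G \<Longrightarrow> h'\<in>G \<Longrightarrow> u\<in>G \<Longrightarrow> \<theta> h = mul u h \<Longrightarrow> \<theta> h' = mul u h' \<Longrightarrow> h = h'"
  shows "has_companion f"
proof -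
  obtain x0 :: 'a where True by blast
  define R where "R z y = the_inv_into G (\<lambda>t. M t z) y" for z y
  have RG: "R z y \<in> G" for z y
  proof -
    have "bij_betw (the_inv_into G (\<lambda>t. M t z)) UNIV G" by (rule bij_betw_the_inv_into[OF reg[of z]])
    then show ?thesis unfolding R_def by (rule bij_betw_apply) simp
  qed
  have RM: "M (R z y) z = y" for z y
    unfolding R_def using f_the_inv_into_f_bij_betw[OF reg[of z]] by simp
  have reginj: "s \<in> G \<Longrightarrow> s' \<in> G \<Longrightarrow> M s z = M s' z \<Longrightarrow> s = s'" for s s' z
    using reg[of z] by (metis bij_betw_def inj_on_def)
  define P where "P h = M h x0" for h
  define Q where "Q x = R x0 x" for x
  have QG: "Q x \<in> G" for x using RG Q_def by simp
  have PQ: "P (Q x) = x" for x using RM P_def Q_def by simp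
  define T where "T x = P (\<theta> (Q x))" for x
  define g where "g x y = P (R (T x) y)" for x y
  have Pinj: "h \<in> G \<Longrightarrow> h' \<in> G \<Longrightarrow> P h = P h' \<Longrightarrow> h = h'" for h h'
    using reginj P_def by metis
  have Tinj: "T x1 = T x2 \<Longrightarrow> x1 = x2" for x1 x2
  proof -
    assume "T x1 = T x2"
    then have "\<theta> (Q x1) = \<theta> (Q x2)" using Pinj thG QG T_def by metis
    then have "Q x1 = Q x2" using thinj QG by (meson inj_onD)
    then show ?thesis using PQ by metis
  qed
  have finj: "f x y1 = f x y2 \<Longrightarrow> y1 = y2" for x y1 y2
    using LPP unfolding is_LPP_def by (metis bij_is_inj injD)
  have lab: "s \<in> G \<Longrightarrow> s' \<in> G \<Longrightarrow> f x (M s x) = f x' (M s' x') \<Longrightarrow> s = s'" for s s' x x'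
  proof -
    assume a: "s \<in> G" "s' \<in> G" "f x (M s x) = f x' (M s' x')"
    then have "f x (M s x) = f x (M s' x)" using fval by metis
    then have "M s x = M s' x" using finj by blast
    then show ?thesis using reginj a by blast
  qed
  have LPPg: "is_LPP g"
    unfolding is_LPP_def
  proof (intro conjI allI)
    fix y show "bij (\<lambda>x. g x y)"
    proof (rule finite_inj_bij, rule injI)
      fix x1 x2 assume "g x1 y = g x2 y"
      then have e: "R (T x1) y = R (T x2) y" unfolding g_def using Pinj RG by blast
      have "M (R (T x1) y) (T x1) = M (R (T x2) y) (T x2)" using RM by simp
      then have "T x1 = T x2" using e injM RG by (metis injD)
      then show "x1 = x2" using Tinj by blast
    qed
  next
    fix x show "bij (\<lambda>y. g x y)"
    proof (rule finite_inj_bij, rule injI)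
      fix y1 y2 assume "g x y1 = g x y2"
      then have e: "R (T x) y1 = R (T x) y2" unfolding g_def using Pinj RG by blast
      then show "y1 = y2" using RM by metis
    qed
  qed
  have pinj: "inj (\<lambda>(x,y). (f x y, g x y))"
  proof (rule injI, clarify)
    fix x y x' y'
    assume ef: "f x y = f x' y'" and eg: "g x y = g x' y'"
    define s where "s = R x y"
    define s' where "s' = R x' y'"
    have ys: "y = M s x" "y' = M s' x'" using RM s_def s'_def by auto
    have sG: "s \<in> G" "s' \<in> G" using RG s_def s'_def by auto
    have "f x (M s x) = f x' (M s' x')" by (simp only: ys[symmetric] ef)
    then have ss: "s = s'" using lab sG by blast
    define t where "t = R (T x) y"
    define t' where "t' = R (T x') y'"
    have tt: "t = t'" using eg Pinj RG unfolding g_def t_def t'_def by blast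
    define u where "u = R x (T x)"
    define u' where "u' = R x' (T x')"
    have uG: "u \<in> G" "u' \<in> G" "t \<in> G" "s \<in> G" using RG u_def u'_def t_def s_def by auto
    have mtu: "mul t u \<in> G" "mul t u' \<in> G" using cl uG by auto
    have "M (mul t u) x = M t (M u x)" using cl uG by simp
    also have "\<dots> = M t (T x)" using RM u_def by simp
    also have "\<dots> = y" using RM t_def by simp
    finally have e1: "M (mul t u) x = y" .
    have "M s x = M (mul t u) x" by (simp only: ys(1)[symmetric] e1)
    then have s1: "s = mul t u" by (rule reginj[OF uG(4) mtu(1)])
    have "M (mul t u') x' = M t (M u' x')" using cl uG by simp
    also have "\<dots> = M t (T x')" using RM u'_def by simp
    also have "\<dots> = y'" using RM t'_def tt by simp
    finally have e2: "M (mul t u') x' = y'" .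
    have "M s x' = M (mul t u') x'" by (simp only: ss ys(2)[symmetric] e2)
    then have s2: "s = mul t u'" by (rule reginj[OF uG(4) mtu(2)])
    have "M (mul t u) x0 = M (mul t u') x0" using s1 s2 by simp
    then have "M t (M u x0) = M t (M u' x0)" using cl uG by simp
    then have "M u x0 = M u' x0" by (rule injD[OF injM[OF uG(3)]])
    then have uu: "u = u'" by (rule reginj[OF uG(1) uG(2)])
    have Px: "M (Q x) x0 = x" "M (Q x') x0 = x'" using PQ P_def by auto
    have muQ: "mul u (Q x) \<in> G" "mul u (Q x') \<in> G" using cl uG QG by auto
    have th1: "\<theta> (Q x) = mul u (Q x)"
    proof -
      have "M (\<theta> (Q x)) x0 = T x" using T_def P_def by simp
      also have "\<dots> = M u x" using RM u_def by simp
      also have "\<dots> = M u (M (Q x) x0)" using Px by simp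
      also have "\<dots> = M (mul u (Q x)) x0" using cl uG QG by simp
      finally show ?thesis by (rule reginj[OF thG[OF QG] muQ(1)])
    qed
    have th2: "\<theta> (Q x') = mul u (Q x')"
    proof -
      have "M (\<theta> (Q x')) x0 = T x'" using T_def P_def by simp
      also have "\<dots> = M u' x'" using RM u'_def by simp
      also have "\<dots> = M u (M (Q x') x0)" using Px uu by simp
      also have "\<dots> = M (mul u (Q x')) x0" using cl uG QG by simp
      finally show ?thesis by (rule reginj[OF thG[OF QG] muQ(2)])
    qed
    have "Q x = Q x'" using orth[OF QG QG _ th1 th2] uG by blast
    then have xx: "x = x'" using Px by metis
    then show "x = x' \<and> y = y'" using ys ss by simp
  qed
  have psurj: "surj (\<lambda>(x,y). (f x y, g x y))"
    using finite_UNIV_inj_surj[OF _ pinj] by simp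
  have "orthogonal f g"
    unfolding orthogonal_def
  proof (intro allI)
    fix u v
    obtain p where p: "(\<lambda>(x,y). (f x y, g x y)) p = (u,v)" using psurj by (metis surjD)
    show "\<exists>!p. f (fst p) (snd p) = u \<and> g (fst p) (snd p) = v"
    proof (rule ex1I[of _ p])
      show "f (fst p) (snd p) = u \<and> g (fst p) (snd p) = v" using p by (cases p) auto
    next
      fix p' assume "f (fst p') (snd p') = u \<and> g (fst p') (snd p') = v"
      then have "(\<lambda>(x,y). (f x y, g x y)) p' = (\<lambda>(x,y). (f x y, g x y)) p" using p by (cases p', cases p) auto
      then show "p' = p" using pinj by (meson injD)
    qed
  qed
  then show ?thesis unfolding has_companion_def using LPPg by blast
qed



definition sd_mul :: "nat \<Rightarrow> nat \<times> nat \<Rightarrow> nat \<times> nat \<Rightarrow> nat \<times> nat" where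
  "sd_mul k s t = ((fst s + (if snd s = 0 then fst t else (k - 1) * fst t)) mod (2*k), (snd s + snd t) mod 2)"

definition sd_th :: "nat \<Rightarrow> nat \<times> nat \<Rightarrow> nat \<times> nat" where
  "sd_th k h = (fst h div 2 + snd h * k, (fst h mod 2 + snd h) mod 2)"

definition sdG :: "nat \<Rightarrow> (nat \<times> nat) set" where
  "sdG k = {0..<2*k} \<times> {0..<2}"

lemma small_dvd_zero: "(n::int) dvd d \<Longrightarrow> \<bar>d\<bar> < n \<Longrightarrow> d = 0"
proof (rule ccontr)
  assume a: "n dvd d" "\<bar>d\<bar> < n" "d \<noteq> 0"
  then have "\<bar>n\<bar> \<le> \<bar>d\<bar>" using dvd_imp_le_int by blast
  then show False using a by linarith
qed

lemma sd_th_G: "k \<ge> 1 \<Longrightarrow> h \<in> sdG k \<Longrightarrow> sd_th k h \<in> sdG k"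
proof -
  assume "k \<ge> 1" "h \<in> sdG k"
  then obtain a b where h: "h = (a,b)" "a < 2*k" "b < 2" unfolding sdG_def by auto
  then have "b = 0 \<or> b = 1" by auto
  moreover have "a div 2 < k" using h by auto
  ultimately have "a div 2 + b * k < 2 * k" by auto
  then show ?thesis using h unfolding sdG_def sd_th_def by auto
qed

lemma sd_th_inj: "k \<ge> 1 \<Longrightarrow> inj_on (sd_th k) (sdG k)"
proof (rule inj_onI)
  fix h h' assume k: "k \<ge> 1" and hG: "h \<in> sdG k" "h' \<in> sdG k" and e: "sd_th k h = sd_th k h'"
  obtain j e1 where h: "h = (j,e1)" by (cases h)
  obtain j' e1' where h': "h' = (j',e1')" by (cases h')
  have b: "j < 2*k" "e1 < 2" "j' < 2*k" "e1' < 2" using hG h h' unfolding sdG_def by auto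
  have e1: "j div 2 + e1 * k = j' div 2 + e1' * k" and e2: "(j mod 2 + e1) mod 2 = (j' mod 2 + e1') mod 2"
    using e h h' unfolding sd_th_def by auto
  have "j div 2 < k" "j' div 2 < k" using b by auto
  moreover have "e1 = 0 \<or> e1 = 1" "e1' = 0 \<or> e1' = 1" using b by auto
  ultimately have "e1 = e1'" using e1 by auto
  moreover have "j mod 2 = 0 \<or> j mod 2 = 1" "j' mod 2 = 0 \<or> j' mod 2 = 1" "e1' = 0 \<or> e1' = 1" using b by auto
  ultimately have "j div 2 = j' div 2" "j mod 2 = j' mod 2" using e1 e2 by (auto; elim disjE; simp)+
  then have "j = j'" by (metis div_mult_mod_eq)
  then show "h = h'" using h h' \<open>e1 = e1'\<close> by simp
qed

lemma sd_mul_G: "k \<ge> 1 \<Longrightarrow> sd_mul k s t \<in> sdG k"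
  unfolding sdG_def sd_mul_def by auto

lemma mod_to_dvd:
  fixes x y n :: nat
  assumes "y = x mod n" "n > 0"
  shows "int n dvd int x - int y"
proof -
  have "int y = int x mod int n" using assms by (simp add: of_nat_mod)
  then show ?thesis by (metis mod_mod_trivial mod_eq_dvd_iff)
qed

lemma coprime_pow2_3: "coprime (2^l :: int) 3"
proof -
  have "coprime (2::int) (2+1)" by (rule coprime_add_one_right)
  then have "coprime (2::int) 3" by simp
  then show ?thesis by simp
qed

lemma sd_orth:
  assumes k: "k = 2^l" "l \<ge> 1" and G: "h \<in> sdG k" "h' \<in> sdG k" "u \<in> sdG k"
  and e: "sd_th k h = sd_mul k u h" "sd_th k h' = sd_mul k u h'"
  shows "h = h'"
proof -
  obtain j e1 where h: "h = (j,e1)" by (cases h)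
  obtain j' e1' where h': "h' = (j',e1')" by (cases h')
  obtain a b where u: "u = (a,b)" by (cases u)
  have "(2::nat)^1 \<le> 2^l" using k(2) by (intro power_increasing) auto
  then have kpos: "k \<ge> 2" using k(1) by simp
  have bd: "j < 2*k" "e1 < 2" "j' < 2*k" "e1' < 2" "a < 2*k" "b < 2" using G h h' u unfolding sdG_def by auto
  have c2: "(j mod 2 + e1) mod 2 = (b + e1) mod 2" "(j' mod 2 + e1') mod 2 = (b + e1') mod 2"
    using e h h' u unfolding sd_th_def sd_mul_def by auto
  have jb: "j mod 2 = b" "j' mod 2 = b"
  proof -
    have "e1 = 0 \<or> e1 = 1" "e1' = 0 \<or> e1' = 1" "b = 0 \<or> b = 1" "j mod 2 = 0 \<or> j mod 2 = 1" "j' mod 2 = 0 \<or> j' mod 2 = 1"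
      using bd by auto
    then show "j mod 2 = b" "j' mod 2 = b" using c2 by (elim disjE; simp)+
  qed
  define m where "m = j div 2"
  define m' where "m' = j' div 2"
  have mk: "m < k" "m' < k" using bd m_def m'_def by auto
  define X where "X = (if b = 0 then j else (k - 1) * j)"
  define X' where "X' = (if b = 0 then j' else (k - 1) * j')"
  have c1: "m + e1 * k = (a + X) mod (2*k)" "m' + e1' * k = (a + X') mod (2*k)"
    using e h h' u unfolding sd_th_def sd_mul_def m_def m'_def X_def X'_def by auto
  have d1: "int (2*k) dvd int (a + X) - int (m + e1*k)" using mod_to_dvd[OF c1(1)] kpos by simp
  have d2: "int (2*k) dvd int (a + X') - int (m' + e1'*k)" using mod_to_dvd[OF c1(2)] kpos by simp
  have d: "int (2*k) dvd (int X - int X') - (int m - int m') - (int e1 - int e1') * int k"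
    using dvd_diff[OF d1 d2] by (simp add: algebra_simps)
  have ee: "e1 = 0 \<or> e1 = 1" "e1' = 0 \<or> e1' = 1" using bd by auto
  have "m = m' \<and> e1 = e1'"
  proof (cases "b = 0")
    case True
    then have jj: "int j = 2 * int m" "int j' = 2 * int m'" using jb m_def m'_def by auto
    have eq: "int X - int X' - (int m - int m') - (int e1 - int e1') * int k = (int m - int m') - (int e1 - int e1') * int k"
      using True jj X_def X'_def by simp
    have dd: "int (2*k) dvd (int m - int m') - (int e1 - int e1') * int k" by (metis d eq)
    have "\<bar>(int m - int m') - (int e1 - int e1') * int k\<bar> < int (2*k)" using ee mk by auto
    then have z: "(int m - int m') - (int e1 - int e1') * int k = 0" using small_dvd_zero dd by blast
    show ?thesis using z ee mk by auto
  next
    case False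
    then have b1: "b = 1" using bd by auto
    have "j = 2*m+1" "j' = 2*m'+1" using jb b1 m_def m'_def by presburger+
    then have jj: "int j = 2 * int m + 1" "int j' = 2 * int m' + 1" by simp_all
    have ik: "int (k - 1) = int k - 1" using kpos by simp
    have "int X - int X' - (int m - int m') - (int e1 - int e1') * int k
          = int (2*k) * (int m - int m') - (3 * (int m - int m') + (int e1 - int e1') * int k)"
      using False jj X_def X'_def ik by (simp add: algebra_simps)
    then have "int (2*k) dvd int (2*k) * (int m - int m') - (3 * (int m - int m') + (int e1 - int e1') * int k)"
      using d by metis
    then have dd: "int (2*k) dvd 3 * (int m - int m') + (int e1 - int e1') * int k"
      by (metis dvd_diff_right_iff dvd_triv_left)
    have "int k dvd int (2*k)" by simp
    then have "int k dvd 3 * (int m - int m') + (int e1 - int e1') * int k" using dd dvd_trans by blast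
    then have "int k dvd 3 * (int m - int m')" by (metis dvd_add_left_iff dvd_triv_right)
    moreover have "coprime (int k) 3" using coprime_pow2_3[of l] k by simp
    ultimately have "int k dvd (int m - int m')" using coprime_dvd_mult_right_iff by blast
    moreover have "\<bar>int m - int m'\<bar> < int k" using mk by auto
    ultimately have mm: "m = m'" using small_dvd_zero by fastforce
    then have "int (2*k) dvd (int e1 - int e1') * int k" using dd by simp
    moreover have "\<bar>(int e1 - int e1') * int k\<bar> < int (2*k)" using ee kpos by auto
    ultimately have "(int e1 - int e1') * int k = 0" using small_dvd_zero by blast
    then show ?thesis using mm kpos by auto
  qed
  then have "j = j'" using m_def m'_def jb by (metis div_mult_mod_eq)
  then show ?thesis using h h' \<open>m = m' \<and> e1 = e1'\<close> by simp
qed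



definition sdM :: "('a \<Rightarrow> 'a) \<Rightarrow> ('a \<Rightarrow> 'a) \<Rightarrow> nat \<times> nat \<Rightarrow> 'a \<Rightarrow> 'a" where
  "sdM A B s = (B ^^ fst s) \<circ> (A ^^ snd s)"

lemma AB_pow:
  assumes AB: "A \<circ> B = B^^r \<circ> A"
  shows "A \<circ> B^^j = B^^(r*j) \<circ> A"
proof (induction j)
  case 0 then show ?case by simp
next
  case (Suc j)
  have "A \<circ> B^^(Suc j) = (A \<circ> B) \<circ> B^^j" by (simp add: funpow_Suc_right o_assoc)
  also have "\<dots> = B^^r \<circ> (A \<circ> B^^j)" using AB by (simp add: o_assoc)
  also have "\<dots> = B^^r \<circ> B^^(r*j) \<circ> A" by (simp only: Suc.IH comp_assoc)
  also have "\<dots> = B^^(r * Suc j) \<circ> A" by (simp add: funpow_add[symmetric] add.commute)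
  finally show ?case .
qed

lemma pow_mod:
  assumes "B^^n = id"
  shows "B^^(x mod n) = B^^x"
proof -
  have "B^^x = B^^(n * (x div n) + x mod n)" by simp
  also have "\<dots> = (B^^n)^^(x div n) \<circ> B^^(x mod n)" by (simp only: funpow_add funpow_mult)
  also have "\<dots> = B^^(x mod n)" using assms by simp
  finally show ?thesis by simp
qed

lemma sd_closure:
  assumes AA: "A \<circ> A = id" and BB: "B^^(2*k) = id" and AB: "A \<circ> B = B^^(k-1) \<circ> A"
    and s: "s \<in> sdG k" and t: "t \<in> sdG k"
  shows "sdM A B (sd_mul k s t) = sdM A B s \<circ> sdM A B t"
proof -
  obtain j e where sj: "s = (j,e)" by (cases s)
  obtain j' e' where tj: "t = (j',e')" by (cases t)
  have b: "e < 2" "e' < 2" using s t sj tj unfolding sdG_def by auto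
  have Amod: "A^^(x mod 2) = A^^x" for x using pow_mod[where B=A and n=2] AA by (simp add: numeral_2_eq_2)
  show ?thesis
  proof (cases "e = 0")
    case True
    have "sdM A B s \<circ> sdM A B t = B^^j \<circ> B^^j' \<circ> A^^e'"
      using True sj tj unfolding sdM_def by (simp add: o_assoc)
    also have "\<dots> = B^^((j + j') mod (2*k)) \<circ> A^^((e + e') mod 2)"
      using pow_mod[OF BB] Amod True by (simp add: funpow_add)
    finally show ?thesis using True sj tj unfolding sdM_def sd_mul_def by simp
  next
    case False
    then have e1: "e = 1" using b by auto
    have "sdM A B s \<circ> sdM A B t = B^^j \<circ> (A \<circ> B^^j') \<circ> A^^e'"
      using e1 sj tj unfolding sdM_def by (simp add: o_assoc)
    also have "\<dots> = B^^j \<circ> B^^((k-1)*j') \<circ> (A \<circ> A^^e')"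
      using AB_pow[OF AB] by (simp add: o_assoc)
    also have "\<dots> = B^^(j + (k-1)*j') \<circ> A^^(Suc e')"
      by (simp add: funpow_add funpow_Suc_right[symmetric] funpow_swap1)
    also have "\<dots> = B^^((j + (k-1)*j') mod (2*k)) \<circ> A^^((e + e') mod 2)"
      using pow_mod[OF BB] Amod e1 by simp
    finally show ?thesis using e1 sj tj unfolding sdM_def sd_mul_def by simp
  qed
qed



definition L1f :: "nat \<Rightarrow> nat \<Rightarrow> nat" where
  "L1f k t = (if even t then (if t = k then k+1 else t) else (if t < k then t+2*k else if t = k+1 then 3*k else t+2*k-1))"
definition L2f :: "nat \<Rightarrow> nat \<Rightarrow> nat" where
  "L2f k t = (if odd t then (if t = k-1 then k else 2*k - t) else (if t < k-2 then 3*k-2-t else if t = k-2 then 2*k else 5*k-1-t))"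
definition tau :: "nat \<Rightarrow> nat" where
  "tau i = (if even i then i+1 else i-1)"
definition p1 :: "nat \<Rightarrow> nat \<Rightarrow> nat" where
  "p1 k t = (if even t then 2*k-1-t else if t < k then k-1-t else 3*k-1-t)"
definition p2 :: "nat \<Rightarrow> nat \<Rightarrow> nat" where
  "p2 k t = (if p1 k t < k then p1 k t + k else p1 k t - k)"

definition sucm :: "nat \<Rightarrow> nat \<Rightarrow> nat" where
  "sucm k t = (if t + 1 = 2*k then 0 else t + 1)"
definition shm :: "nat \<Rightarrow> nat \<Rightarrow> nat" where
  "shm k p = (if p + k - 1 < 2*k then p + k - 1 else p + k - 1 - 2*k)"

lemma sucm_eq: "t < 2*k \<Longrightarrow> (t+1) mod (2*k) = sucm k t"
  unfolding sucm_def by (auto simp: mod_if)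
lemma shm_eq: "k \<ge> 1 \<Longrightarrow> p < 2*k \<Longrightarrow> (p + (k-1)) mod (2*k) = shm k p"
  unfolding shm_def by (auto simp: mod_if le_mod_geq)

lemma L1e: "L1f (2*h) (2*x) = (if x = h then Suc (2*h) else 2*x)"
  unfolding L1f_def by simp
lemma L1o: "L1f (2*h) (Suc (2*x)) = (if x < h then Suc (2*(x+2*h)) else if x = h then 2*(3*h) else 2*(x+2*h))"
  unfolding L1f_def by auto
lemma L2o: "x < 2*h \<Longrightarrow> L2f (2*h) (Suc (2*x)) = (if Suc x = h then 2*h else Suc (2*(2*h - Suc x)))"
  unfolding L2f_def by auto
lemma L2e: "x < 2*h \<Longrightarrow> L2f (2*h) (2*x) = (if Suc x < h then 2*(3*h - Suc x) else if Suc x = h then 2*(2*h) else Suc (2*(5*h - Suc x)))"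
  unfolding L2f_def by auto
lemma taue: "tau (2*x) = Suc (2*x)" unfolding tau_def by simp
lemma tauo: "tau (Suc (2*x)) = 2*x" unfolding tau_def by simp
lemma p1e: "x < 2*h \<Longrightarrow> p1 (2*h) (2*x) = Suc (2*(2*h - Suc x))"
  unfolding p1_def by auto
lemma p1o: "x < 2*h \<Longrightarrow> p1 (2*h) (Suc (2*x)) = (if x < h then 2*(h - Suc x) else 2*(3*h - Suc x))"
  unfolding p1_def by auto
lemma p2e: "x < 2*h \<Longrightarrow> p2 (2*h) (2*x) = (if h \<le> x then Suc (2*(3*h - Suc x)) else Suc (2*(h - Suc x)))"
  unfolding p2_def p1_def by auto
lemma p2o: "x < 2*h \<Longrightarrow> p2 (2*h) (Suc (2*x)) = 2*(2*h - Suc x)"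
  unfolding p2_def p1_def by auto
lemma sucme: "sucm (2*h) (2*x) = Suc (2*x)" unfolding sucm_def by presburger
lemma sucmo: "sucm (2*h) (Suc (2*x)) = (if Suc x = 2*h then 0 else 2*(Suc x))" unfolding sucm_def by auto
lemma shmo: "shm (2*h) (Suc (2*x)) = (if x < h then 2*(x+h) else 2*(x - h))" unfolding shm_def by auto
lemma shme: "1 \<le> h \<Longrightarrow> shm (2*h) (2*x) = (if x \<le> h then Suc (2*(x+h-1)) else Suc (2*(x-h-1)))"
  unfolding shm_def by auto

lemma L1ss: "L1f (2*h) (Suc (Suc (2*x))) = (if Suc x = h then Suc (2*h) else Suc (Suc (2*x)))"
  unfolding L1f_def by auto
lemma L1z: "1 \<le> h \<Longrightarrow> L1f (2*h) 0 = 0" unfolding L1f_def by auto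
lemma L2ss: "Suc x < 2*h \<Longrightarrow> L2f (2*h) (Suc (Suc (2*x))) = (if Suc (Suc x) < h then 2*(3*h - Suc (Suc x)) else if Suc (Suc x) = h then 2*(2*h) else Suc (2*(5*h - Suc (Suc x))))"
  unfolding L2f_def by auto
lemma L2z: "2 \<le> h \<Longrightarrow> L2f (2*h) 0 = 2*(3*h - 1)" unfolding L2f_def by auto

lemma shm0: "1 \<le> h \<Longrightarrow> shm (2*h) 0 = Suc (2*(h - 1))" unfolding shm_def by auto

lemma sp1: "2 \<le> h \<Longrightarrow> L2f (2*h) (Suc 0) = Suc (2*(2*h - 1))" "2 \<le> h \<Longrightarrow> shm (2*h) (Suc 0) = 2*h"
  "2 \<le> h \<Longrightarrow> L1f (2*h) (Suc 0) = Suc (2*(2*h))"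
  unfolding L2f_def shm_def L1f_def by auto

lemmas nfs = shm0 sp1 L1e L1o L2e L2o p1e p1o p2e p2o sucme sucmo shmo shme L1ss L1z L2ss L2z

lemma rel1e: "h \<ge> 2 \<Longrightarrow> x < 2*h \<Longrightarrow> tau (L1f (2*h) (sucm (2*h) (2*x))) = L2f (2*h) (shm (2*h) (p1 (2*h) (2*x)))"
  by (simp add: nfs tau_def split: if_split; arith)
lemma rel1o: "h \<ge> 2 \<Longrightarrow> x < 2*h \<Longrightarrow> tau (L1f (2*h) (sucm (2*h) (Suc (2*x)))) = L2f (2*h) (shm (2*h) (p1 (2*h) (Suc (2*x))))"
  by (simp add: nfs tau_def split: if_split; arith)
lemma rel2e: "h \<ge> 2 \<Longrightarrow> x < 2*h \<Longrightarrow> tau (L2f (2*h) (sucm (2*h) (2*x))) = L1f (2*h) (shm (2*h) (p2 (2*h) (2*x)))"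
  by (simp add: nfs tau_def split: if_split; arith)
lemma rel2o: "h \<ge> 2 \<Longrightarrow> x < 2*h \<Longrightarrow> tau (L2f (2*h) (sucm (2*h) (Suc (2*x)))) = L1f (2*h) (shm (2*h) (p2 (2*h) (Suc (2*x))))"
  by (simp add: nfs tau_def split: if_split; arith)

lemma par_ne [simp]: "(2*a = Suc (2*b)) = False" "(Suc (2*a) = 2*b) = False" for a b :: nat
  by presburger+

lemma par: "\<exists>s. t = 2*s \<or> t = Suc (2*s)" for t :: nat by presburger

lemma rel0e0: "h \<ge> 2 \<Longrightarrow> x < 2*h \<Longrightarrow> p1 (2*h) (2*x) < 4*h"
  by (simp add: nfs tau_def split: if_split; arith)
lemma rel0e1: "h \<ge> 2 \<Longrightarrow> x < 2*h \<Longrightarrow> tau (L1f (2*h) (2*x)) = L2f (2*h) (p1 (2*h) (2*x))"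
  by (simp add: nfs tau_def split: if_split; arith)
lemma rel0e2: "h \<ge> 2 \<Longrightarrow> x < 2*h \<Longrightarrow> p2 (2*h) (2*x) < 4*h"
  by (simp add: nfs tau_def split: if_split; arith)
lemma rel0e3: "h \<ge> 2 \<Longrightarrow> x < 2*h \<Longrightarrow> tau (L2f (2*h) (2*x)) = L1f (2*h) (p2 (2*h) (2*x))"
  by (simp add: nfs tau_def split: if_split; arith)
lemmas rel0e = rel0e0 rel0e1 rel0e2 rel0e3

lemma rel0o0: "h \<ge> 2 \<Longrightarrow> x < 2*h \<Longrightarrow> p1 (2*h) (Suc (2*x)) < 4*h"
  by (simp add: nfs tau_def split: if_split; arith)
lemma rel0o1: "h \<ge> 2 \<Longrightarrow> x < 2*h \<Longrightarrow> tau (L1f (2*h) (Suc (2*x))) = L2f (2*h) (p1 (2*h) (Suc (2*x)))"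
  by (simp add: nfs tau_def split: if_split; arith)
lemma rel0o2: "h \<ge> 2 \<Longrightarrow> x < 2*h \<Longrightarrow> p2 (2*h) (Suc (2*x)) < 4*h"
  by (simp add: nfs tau_def split: if_split; arith)
lemma rel0o3: "h \<ge> 2 \<Longrightarrow> x < 2*h \<Longrightarrow> tau (L2f (2*h) (Suc (2*x))) = L1f (2*h) (p2 (2*h) (Suc (2*x)))"
  by (simp add: nfs tau_def split: if_split; arith)
lemmas rel0o = rel0o0 rel0o1 rel0o2 rel0o3

lemma Lb_e: "h \<ge> 2 \<Longrightarrow> x < 2*h \<Longrightarrow> L1f (2*h) (2*x) < 8*h \<and> L2f (2*h) (2*x) < 8*h"
  by (simp add: nfs tau_def split: if_split; arith)
lemma Lb_o: "h \<ge> 2 \<Longrightarrow> x < 2*h \<Longrightarrow> L1f (2*h) (Suc (2*x)) < 8*h \<and> L2f (2*h) (Suc (2*x)) < 8*h"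
  by (simp add: nfs tau_def split: if_split; arith)

lemma L_bound: "k = 2*h \<Longrightarrow> h \<ge> 2 \<Longrightarrow> t < 2*k \<Longrightarrow> L1f k t < 4*k \<and> L2f k t < 4*k"
proof -
  assume a: "k = 2*h" "h \<ge> 2" "t < 2*k"
  obtain x where "t = 2*x \<or> t = Suc (2*x)" using par by blast
  then show ?thesis using a Lb_e[of h x] Lb_o[of h x] by auto
qed

lemma L1_inj: "k = 2*h \<Longrightarrow> h \<ge> 2 \<Longrightarrow> t < 2*k \<Longrightarrow> t' < 2*k \<Longrightarrow> L1f k t = L1f k t' \<Longrightarrow> t = t'"
proof -
  assume a: "k = 2*h" "h \<ge> 2" "t < 2*k" "t' < 2*k" "L1f k t = L1f k t'"
  obtain x where x: "t = 2*x \<or> t = Suc (2*x)" using par by blast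
  obtain y where y: "t' = 2*y \<or> t' = Suc (2*y)" using par by blast
  have "x < 2*h" "y < 2*h" using x y a by auto
  then show ?thesis using x y a by (auto simp: nfs split: if_splits; arith)
qed

lemma L2_inj: "k = 2*h \<Longrightarrow> h \<ge> 2 \<Longrightarrow> t < 2*k \<Longrightarrow> t' < 2*k \<Longrightarrow> L2f k t = L2f k t' \<Longrightarrow> t = t'"
proof -
  assume a: "k = 2*h" "h \<ge> 2" "t < 2*k" "t' < 2*k" "L2f k t = L2f k t'"
  obtain x where x: "t = 2*x \<or> t = Suc (2*x)" using par by blast
  obtain y where y: "t' = 2*y \<or> t' = Suc (2*y)" using par by blast
  have "x < 2*h" "y < 2*h" using x y a by auto
  then show ?thesis using x y a by (auto simp: nfs split: if_splits; arith)
qed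

definition inS1 :: "nat \<Rightarrow> nat \<Rightarrow> bool" where
  "inS1 h v = ((even v \<and> v < 4*h \<and> v \<noteq> 2*h) \<or> v = Suc (2*h) \<or> (odd v \<and> 4*h < v \<and> v < 6*h) \<or> v = 6*h \<or> (even v \<and> 6*h < v \<and> v < 8*h))"
lemma S1e: "h \<ge> 2 \<Longrightarrow> x < 2*h \<Longrightarrow> inS1 h (L1f (2*h) (2*x))"
  by (simp add: nfs inS1_def split: if_split; arith)
lemma S1o: "h \<ge> 2 \<Longrightarrow> x < 2*h \<Longrightarrow> inS1 h (L1f (2*h) (Suc (2*x)))"
  by (simp add: nfs inS1_def split: if_split; arith)
lemma S2e: "h \<ge> 2 \<Longrightarrow> x < 2*h \<Longrightarrow> \<not> inS1 h (L2f (2*h) (2*x))"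
  by (simp add: nfs inS1_def split: if_split; arith)
lemma S2o: "h \<ge> 2 \<Longrightarrow> x < 2*h \<Longrightarrow> \<not> inS1 h (L2f (2*h) (Suc (2*x)))"
  by (simp add: nfs inS1_def split: if_split; arith)

lemma L12_disj: "k = 2*h \<Longrightarrow> h \<ge> 2 \<Longrightarrow> t < 2*k \<Longrightarrow> t' < 2*k \<Longrightarrow> L1f k t \<noteq> L2f k t'"
proof -
  assume a: "k = 2*h" "h \<ge> 2" "t < 2*k" "t' < 2*k"
  obtain x where x: "t = 2*x \<or> t = Suc (2*x)" using par by blast
  obtain y where y: "t' = 2*y \<or> t' = Suc (2*y)" using par by blast
  have "x < 2*h" "y < 2*h" using x y a by auto
  then show ?thesis using x y a S1e[of h x] S1o[of h x] S2e[of h y] S2o[of h y] by auto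
qed

lemma rel1: "k = 2*h \<Longrightarrow> h \<ge> 2 \<Longrightarrow> t < 2*k \<Longrightarrow>
   p1 k t < 2*k \<and> tau (L1f k t) = L2f k (p1 k t) \<and> tau (L1f k (sucm k t)) = L2f k (shm k (p1 k t))"
proof -
  assume a: "k = 2*h" "h \<ge> 2" "t < 2*k"
  obtain x where x: "t = 2*x \<or> t = Suc (2*x)" using par by blast
  have "x < 2*h" using x a by auto
  then show ?thesis using x a rel0e[of h x] rel0o[of h x] rel1e[of h x] rel1o[of h x] by auto
qed

lemma rel2: "k = 2*h \<Longrightarrow> h \<ge> 2 \<Longrightarrow> t < 2*k \<Longrightarrow>
   p2 k t < 2*k \<and> tau (L2f k t) = L1f k (p2 k t) \<and> tau (L2f k (sucm k t)) = L1f k (shm k (p2 k t))"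
proof -
  assume a: "k = 2*h" "h \<ge> 2" "t < 2*k"
  obtain x where x: "t = 2*x \<or> t = Suc (2*x)" using par by blast
  have "x < 2*h" using x a by auto
  then show ?thesis using x a rel0e[of h x] rel0o[of h x] rel2e[of h x] rel2o[of h x] by auto
qed

lemma tau_tau: "k = 2*h \<Longrightarrow> i < 4*k \<Longrightarrow> tau i < 4*k \<and> tau (tau i) = i"
proof -
  assume a: "k = 2*h" "i < 4*k"
  obtain x where x: "i = 2*x \<or> i = Suc (2*x)" using par by blast
  then show ?thesis using a unfolding tau_def by auto
qed



lemma concat_pair:
  "concat (map (\<lambda>i. [f i, g i]) [0..<m]) = map (\<lambda>t. if even t then f (t div 2) else g (t div 2)) [0..<2*m]"
proof (induction m)
  case 0 then show ?case by simp
next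
  case (Suc m)
  have "[0..<2 * Suc m] = [0..<2*m] @ [2*m, 2*m+1]" by (simp add: upt_Suc)
  then show ?case using Suc by simp
qed

lemma D1_eq:
  assumes "k = 2*h" "h \<ge> 2"
  shows "D1_idx k = map (L1f k) [0..<2*k]"
proof -
  have "D1_idx k = map (\<lambda>t. if even t then 2*(t div 2) else 2*(t div 2) + 2*k + 1) [0..<k]
        @ [k+1, 3*k] @ map (\<lambda>t. if even t then k + 2*(t div 2) + 2 else 3*k + 2*(t div 2) + 2) [0..<k-2]"
  proof -
    have hk: "2 * (k div 2) = k" "2 * ((k - 2) div 2) = k - 2" using assms by auto
    have c1: "concat (map (\<lambda>i. [2*i, 2*i + 2*k + 1]) [0..<k div 2]) = map (\<lambda>t. if even t then 2*(t div 2) else 2*(t div 2) + 2*k + 1) [0..<k]"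
      using concat_pair[where f="\<lambda>i. 2*i" and g="\<lambda>i. 2*i + 2*k + 1" and m="k div 2"] unfolding hk .
    have c2: "concat (map (\<lambda>j. [k + 2*j + 2, 3*k + 2*j + 2]) [0..<(k - 2) div 2]) = map (\<lambda>t. if even t then k + 2*(t div 2) + 2 else 3*k + 2*(t div 2) + 2) [0..<k-2]"
      using concat_pair[where f="\<lambda>j. k + 2*j + 2" and g="\<lambda>j. 3*k + 2*j + 2" and m="(k-2) div 2"] unfolding hk .
    show ?thesis unfolding D1_idx_def c1 c2 by (rule refl)
  qed
  also have "\<dots> = map (L1f k) [0..<2*k]"
  proof (rule nth_equalityI)
    show "length (map (\<lambda>t. if even t then 2*(t div 2) else 2*(t div 2) + 2*k + 1) [0..<k]
        @ [k+1, 3*k] @ map (\<lambda>t. if even t then k + 2*(t div 2) + 2 else 3*k + 2*(t div 2) + 2) [0..<k-2])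
        = length (map (L1f k) [0..<2*k])" using assms by simp
  next
    fix i assume i: "i < length (map (\<lambda>t. if even t then 2*(t div 2) else 2*(t div 2) + 2*k + 1) [0..<k]
        @ [k+1, 3*k] @ map (\<lambda>t. if even t then k + 2*(t div 2) + 2 else 3*k + 2*(t div 2) + 2) [0..<k-2])"
    then have i2: "i < 2*k" using assms by simp
    show "(map (\<lambda>t. if even t then 2*(t div 2) else 2*(t div 2) + 2*k + 1) [0..<k]
        @ [k+1, 3*k] @ map (\<lambda>t. if even t then k + 2*(t div 2) + 2 else 3*k + 2*(t div 2) + 2) [0..<k-2]) ! i
        = map (L1f k) [0..<2*k] ! i"
    proof (cases "i < k")
      case True
      obtain y where y: "i = 2*y \<or> i = Suc (2*y)" using par by blast
      show ?thesis using True i2 assms y by (elim disjE) (auto simp: nth_append L1f_def)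
    next
      case False
      then consider "i = k" | "i = k+1" | "i \<ge> k+2" by linarith
      then show ?thesis
      proof cases
        case 1 then show ?thesis using i2 assms unfolding L1f_def by (simp add: nth_append)
      next
        case 2 then show ?thesis using i2 assms unfolding L1f_def by (simp add: nth_append)
      next
        case 3
        then have "i - k - 2 < k - 2" using i2 by simp
        define r where "r = i - (k+2)"
        have ir: "i = k + 2 + r" using 3 r_def by simp
        obtain y where y: "r = 2*y \<or> r = Suc (2*y)" using par by blast
        show ?thesis using ir \<open>i - k - 2 < k - 2\<close> i2 assms y by (elim disjE) (auto simp: nth_append L1f_def)
      qed
    qed
  qed
  finally show ?thesis .
qed

lemma D2_eq:
  assumes "k = 2*h" "h \<ge> 2"
  shows "D2_idx k = map (L2f k) [0..<2*k]"
proof -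
  have "D2_idx k = map (\<lambda>t. if even t then 3*k - 2 - 2*(t div 2) else 2*k - 1 - 2*(t div 2)) [0..<k-2]
        @ [2*k, k] @ map (\<lambda>t. if even t then 4*k - 1 - 2*(t div 2) else k - 1 - 2*(t div 2)) [0..<k]"
  proof -
    have hk: "2 * (k div 2) = k" "2 * ((k - 2) div 2) = k - 2" using assms by auto
    have c1: "concat (map (\<lambda>j. [3*k - 2 - 2*j, 2*k - 1 - 2*j]) [0..<(k - 2) div 2]) = map (\<lambda>t. if even t then 3*k - 2 - 2*(t div 2) else 2*k - 1 - 2*(t div 2)) [0..<k-2]"
      using concat_pair[where f="\<lambda>j. 3*k - 2 - 2*j" and g="\<lambda>j. 2*k - 1 - 2*j" and m="(k-2) div 2"] unfolding hk .
    have c2: "concat (map (\<lambda>i. [4*k - 1 - 2*i, k - 1 - 2*i]) [0..<k div 2]) = map (\<lambda>t. if even t then 4*k - 1 - 2*(t div 2) else k - 1 - 2*(t div 2)) [0..<k]"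
      using concat_pair[where f="\<lambda>i. 4*k - 1 - 2*i" and g="\<lambda>i. k - 1 - 2*i" and m="k div 2"] unfolding hk .
    show ?thesis unfolding D2_idx_def c1 c2 by (rule refl)
  qed
  also have "\<dots> = map (L2f k) [0..<2*k]"
  proof (rule nth_equalityI)
    show "length (map (\<lambda>t. if even t then 3*k - 2 - 2*(t div 2) else 2*k - 1 - 2*(t div 2)) [0..<k-2]
        @ [2*k, k] @ map (\<lambda>t. if even t then 4*k - 1 - 2*(t div 2) else k - 1 - 2*(t div 2)) [0..<k])
        = length (map (L2f k) [0..<2*k])" using assms by simp
  next
    fix i assume i: "i < length (map (\<lambda>t. if even t then 3*k - 2 - 2*(t div 2) else 2*k - 1 - 2*(t div 2)) [0..<k-2]
        @ [2*k, k] @ map (\<lambda>t. if even t then 4*k - 1 - 2*(t div 2) else k - 1 - 2*(t div 2)) [0..<k])"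
    then have i2: "i < 2*k" using assms by simp
    show "(map (\<lambda>t. if even t then 3*k - 2 - 2*(t div 2) else 2*k - 1 - 2*(t div 2)) [0..<k-2]
        @ [2*k, k] @ map (\<lambda>t. if even t then 4*k - 1 - 2*(t div 2) else k - 1 - 2*(t div 2)) [0..<k]) ! i
        = map (L2f k) [0..<2*k] ! i"
    proof (cases "i < k - 2")
      case True
      obtain y where y: "i = 2*y \<or> i = Suc (2*y)" using par by blast
      show ?thesis using True i2 assms y by (elim disjE) (auto simp: nth_append L2f_def)
    next
      case False
      then consider "i = k - 2" | "i = k - 1" | "i \<ge> k" by linarith
      then show ?thesis
      proof cases
        case 1 then show ?thesis using i2 assms unfolding L2f_def by (auto simp: nth_append)
      next
        case 2 then show ?thesis using i2 assms unfolding L2f_def by (auto simp: nth_append)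
      next
        case 3
        then have "i - k < k" using i2 by simp
        define r where "r = i - k"
        have ir: "i = k + r" using 3 r_def by simp
        obtain y where y: "r = 2*y \<or> r = Suc (2*y)" using par by blast
        show ?thesis using ir \<open>i - k < k\<close> i2 assms y by (elim disjE) (auto simp: nth_append L2f_def)
      qed
    qed
  qed
  finally show ?thesis .
qed



lemma foldr_comp: "foldr (\<lambda>m g. F m \<circ> g) xs h = foldr (\<lambda>m g. F m \<circ> g) xs id \<circ> h"
  by (induction xs) (simp_all add: o_assoc)

definition FA :: "(nat \<Rightarrow> 'a) \<Rightarrow> nat \<Rightarrow> 'a \<Rightarrow> 'a" where
  "FA c N = foldr (\<lambda>m g. cycle_of_list [c (2*m), c (2*m+1)] \<circ> g) [0..<N] id"

lemma FA_Suc: "FA c (Suc N) = FA c N \<circ> cycle_of_list [c (2*N), c (2*N+1)]"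
proof -
  have "FA c (Suc N) = foldr (\<lambda>m g. cycle_of_list [c (2*m), c (2*m+1)] \<circ> g) [0..<N] (cycle_of_list [c (2*N), c (2*N+1)] \<circ> id)"
    unfolding FA_def by simp
  also have "\<dots> = FA c N \<circ> (cycle_of_list [c (2*N), c (2*N+1)] \<circ> id)" unfolding FA_def by (rule foldr_comp)
  finally show ?thesis by simp
qed

lemma perm_a_aux:
  assumes c: "inj_on c {..<4*k}" and k: "k = 2*h"
  shows "N \<le> 2*k \<Longrightarrow> i < 4*k \<Longrightarrow> FA c N (c i) = (if i < 2*N then c (tau i) else c i)"
proof (induction N arbitrary: i)
  case 0 then show ?case by (simp add: FA_def)
next
  case (Suc N)
  let ?F = "cycle_of_list [c (2*N), c (2*N+1)]"
  have eq: "FA c (Suc N) (c i) = FA c N (?F (c i))" by (simp only: FA_Suc comp_apply)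
  have b: "2*N+1 < 4*k" using Suc.prems by simp
  show ?case
  proof (cases "i = 2*N \<or> i = 2*N+1")
    case True
    then have Fi: "?F (c i) = c (tau i)" using b c Suc.prems
      by (auto simp: transpose_def tau_def inj_on_def)
    have "tau i < 4*k" "\<not> tau i < 2*N" using True b unfolding tau_def by auto
    then have IH: "FA c N (c (tau i)) = c (tau i)" using Suc.IH[of "tau i"] Suc.prems by simp
    have "FA c (Suc N) (c i) = c (tau i)" using eq Fi IH by simp
    then show ?thesis using True by auto
  next
    case False
    have "c i \<noteq> c (2*N)" "c i \<noteq> c (2*N+1)" using False c b Suc.prems by (auto simp: inj_on_def)
    then have Fi: "?F (c i) = c i" by (simp add: transpose_def)
    have IH: "FA c N (c i) = (if i < 2*N then c (tau i) else c i)" using Suc.IH[of i] Suc.prems by simp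
    have "FA c (Suc N) (c i) = (if i < 2*N then c (tau i) else c i)" using eq Fi IH by simp
    then show ?thesis using False by auto
  qed
qed

lemma perm_a_val:
  assumes c: "inj_on c {..<4*k}" and k: "k = 2*h" and i: "i < 4*k"
  shows "perm_a c (4*k) (c i) = c (tau i)"
proof -
  have "perm_a c (4*k) = FA c (2*k)" unfolding perm_a_def FA_def by simp
  then show ?thesis using perm_a_aux[OF c k, of "2*k" i] i by simp
qed

lemma cyc_pow: "distinct cs \<Longrightarrow> i < length cs \<Longrightarrow> (cycle_of_list cs ^^ n) (cs!i) = cs!((i+n) mod length cs)"
proof -
  assume d: "distinct cs" and i: "i < length cs"
  have "map (cycle_of_list cs ^^ n) cs ! i = rotate n cs ! i" using cyclic_rotation[OF d] by simp
  then show ?thesis using i by (simp add: nth_rotate add.commute)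
qed

lemma cyc_pow_out: "x \<notin> set cs \<Longrightarrow> (cycle_of_list cs ^^ n) x = x"
  by (induction n) (simp_all add: id_outside_supp)

lemma comm_funpow:
  assumes fg: "f \<circ> g = g \<circ> f" shows "g \<circ> f^^n = f^^n \<circ> g"
proof (induction n)
  case 0 then show ?case by simp
next
  case (Suc n)
  have "g \<circ> f^^Suc n = (g \<circ> f) \<circ> f^^n" by (simp only: funpow.simps(2) comp_assoc)
  also have "\<dots> = (f \<circ> g) \<circ> f^^n" by (simp only: fg)
  also have "\<dots> = f \<circ> (g \<circ> f^^n)" by (simp only: comp_assoc)
  also have "\<dots> = f \<circ> (f^^n \<circ> g)" by (simp only: Suc.IH)
  also have "\<dots> = f^^Suc n \<circ> g" by (simp only: funpow.simps(2) comp_assoc)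
  finally show ?case .
qed

lemma comm_pow:
  assumes fg: "f \<circ> g = g \<circ> f" shows "(f \<circ> g)^^n = f^^n \<circ> g^^n"
proof (induction n)
  case 0 then show ?case by simp
next
  case (Suc n)
  have "(f \<circ> g)^^Suc n = (f \<circ> g) \<circ> (f^^n \<circ> g^^n)" by (simp only: funpow.simps(2) Suc.IH)
  also have "\<dots> = f \<circ> (g \<circ> f^^n) \<circ> g^^n" by (simp only: comp_assoc)
  also have "\<dots> = f \<circ> (f^^n \<circ> g) \<circ> g^^n" by (simp only: comm_funpow[OF fg])
  also have "\<dots> = f^^Suc n \<circ> g^^Suc n" by (simp only: funpow.simps(2) comp_assoc)
  finally show ?case .
qed



lemma C_facts:
  assumes k: "k = 2*h" "h \<ge> 2" and c: "inj_on c {..<4*k}"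
  shows "distinct (map c (D1_idx k))" "distinct (map c (D2_idx k))"
    "set (map c (D1_idx k)) \<inter> set (map c (D2_idx k)) = {}"
    "t < 2*k \<Longrightarrow> map c (D1_idx k) ! t = c (L1f k t)"
    "t < 2*k \<Longrightarrow> map c (D2_idx k) ! t = c (L2f k t)"
    "length (map c (D1_idx k)) = 2*k" "length (map c (D2_idx k)) = 2*k"
proof -
  have i1: "inj_on (\<lambda>t. c (L1f k t)) {0..<2*k}"
    using c L1_inj[OF k] L_bound[OF k] by (auto simp: inj_on_def)
  have i2: "inj_on (\<lambda>t. c (L2f k t)) {0..<2*k}"
    using c L2_inj[OF k] L_bound[OF k] by (auto simp: inj_on_def)
  show "distinct (map c (D1_idx k))" using i1 D1_eq[OF k] by (simp add: distinct_map comp_def)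
  show "distinct (map c (D2_idx k))" using i2 D2_eq[OF k] by (simp add: distinct_map comp_def)
  show "set (map c (D1_idx k)) \<inter> set (map c (D2_idx k)) = {}"
  proof -
    have "c (L1f k t) \<noteq> c (L2f k t')" if "t < 2*k" "t' < 2*k" for t t'
    proof
      assume "c (L1f k t) = c (L2f k t')"
      then have "L1f k t = L2f k t'" using inj_onD[OF c] L_bound[OF k that(1)] L_bound[OF k that(2)] by simp
      then show False using L12_disj[OF k that] by simp
    qed
    then show ?thesis using D1_eq[OF k] D2_eq[OF k] by auto
  qed
  show "t < 2*k \<Longrightarrow> map c (D1_idx k) ! t = c (L1f k t)" using D1_eq[OF k] by simp
  show "t < 2*k \<Longrightarrow> map c (D2_idx k) ! t = c (L2f k t)" using D2_eq[OF k] by simp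
  show "length (map c (D1_idx k)) = 2*k" "length (map c (D2_idx k)) = 2*k"
    using D1_eq[OF k] D2_eq[OF k] by simp_all
qed

lemma B_pow:
  assumes k: "k = 2*h" "h \<ge> 2" and c: "inj_on c {..<4*k}" and t: "t < 2*k"
  shows "(perm_b c k ^^ n) (c (L1f k t)) = c (L1f k ((t+n) mod (2*k)))"
    "(perm_b c k ^^ n) (c (L2f k t)) = c (L2f k ((t+n) mod (2*k)))"
proof -
  note F = C_facts[OF k c]
  let ?C1 = "map c (D1_idx k)" and ?C2 = "map c (D2_idx k)"
  have com: "cycle_of_list ?C1 \<circ> cycle_of_list ?C2 = cycle_of_list ?C2 \<circ> cycle_of_list ?C1"
    using cycles_commute F(1,2,3) by blast
  have pw: "perm_b c k ^^ n = cycle_of_list ?C1 ^^ n \<circ> cycle_of_list ?C2 ^^ n"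
    unfolding perm_b_def using comm_pow[OF com] by simp
  have t2: "(t+n) mod (2*k) < 2*k" using t by simp
  have in1: "c (L1f k s) \<in> set ?C1" if "s < 2*k" for s using F(4)[OF that] F(6) that by (metis nth_mem)
  have in2: "c (L2f k s) \<in> set ?C2" if "s < 2*k" for s using F(5)[OF that] F(7) that by (metis nth_mem)
  have "c (L1f k t) \<notin> set ?C2" using in1[OF t] F(3) by blast
  then have "(cycle_of_list ?C2 ^^ n) (c (L1f k t)) = c (L1f k t)" by (rule cyc_pow_out)
  then have "(perm_b c k ^^ n) (c (L1f k t)) = (cycle_of_list ?C1 ^^ n) (c (L1f k t))"
    using pw by simp
  also have "\<dots> = (cycle_of_list ?C1 ^^ n) (?C1 ! t)" using F(4)[OF t] by simp
  also have "\<dots> = ?C1 ! ((t+n) mod (2*k))" using cyc_pow[OF F(1)] F(6) t by simp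
  also have "\<dots> = c (L1f k ((t+n) mod (2*k)))" using F(4)[OF t2] by simp
  finally show "(perm_b c k ^^ n) (c (L1f k t)) = c (L1f k ((t+n) mod (2*k)))" .
  have "(cycle_of_list ?C2 ^^ n) (c (L2f k t)) = (cycle_of_list ?C2 ^^ n) (?C2 ! t)" using F(5)[OF t] by simp
  also have "\<dots> = ?C2 ! ((t+n) mod (2*k))" using cyc_pow[OF F(2)] F(7) t by simp
  also have "\<dots> = c (L2f k ((t+n) mod (2*k)))" using F(5)[OF t2] by simp
  finally have e2: "(cycle_of_list ?C2 ^^ n) (c (L2f k t)) = c (L2f k ((t+n) mod (2*k)))" .
  show "(perm_b c k ^^ n) (c (L2f k t)) = c (L2f k ((t+n) mod (2*k)))"
  proof -
    have "c (L2f k ((t+n) mod (2*k))) \<notin> set ?C1" using in2[OF t2] F(3) by blast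
    then have "(cycle_of_list ?C1 ^^ n) (c (L2f k ((t+n) mod (2*k)))) = c (L2f k ((t+n) mod (2*k)))" by (rule cyc_pow_out)
    then show ?thesis using pw e2 by simp
  qed
qed

lemma coverage:
  assumes k: "k = 2*h" "h \<ge> 2" and i: "i < 4*k"
  shows "\<exists>t<2*k. i = L1f k t \<or> i = L2f k t"
proof -
  let ?S1 = "L1f k ` {..<2*k}" and ?S2 = "L2f k ` {..<2*k}"
  have c1: "card ?S1 = 2*k" using L1_inj[OF k] by (subst card_image) (auto simp: inj_on_def)
  have c2: "card ?S2 = 2*k" using L2_inj[OF k] by (subst card_image) (auto simp: inj_on_def)
  have dj: "?S1 \<inter> ?S2 = {}" using L12_disj[OF k] by auto
  have "card (?S1 \<union> ?S2) = 4*k" using c1 c2 dj by (simp add: card_Un_disjoint)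
  moreover have "?S1 \<union> ?S2 \<subseteq> {..<4*k}" using L_bound[OF k] by auto
  ultimately have "?S1 \<union> ?S2 = {..<4*k}" by (metis card_lessThan card_subset_eq finite_lessThan)
  then show ?thesis using i by blast
qed

lemma relations:
  assumes k: "k = 2*h" "h \<ge> 2" and c: "bij_betw c {..<4*k} UNIV"
  shows "perm_a c (4*k) \<circ> perm_a c (4*k) = id"
    "perm_b c k ^^ (2*k) = id"
    "perm_a c (4*k) \<circ> perm_b c k = perm_b c k ^^ (k-1) \<circ> perm_a c (4*k)"
proof -
  have ci: "inj_on c {..<4*k}" using c by (simp add: bij_betw_def)
  have cs: "\<exists>i<4*k. x = c i" for x using c unfolding bij_betw_def by auto
  have cov: "\<exists>t<2*k. x = c (L1f k t) \<or> x = c (L2f k t)" for x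
    using cs[of x] coverage[OF k] by blast
  have k1: "k \<ge> 1" using k by simp
  show "perm_a c (4*k) \<circ> perm_a c (4*k) = id"
  proof
    fix x obtain i where i: "i < 4*k" "x = c i" using cs by blast
    show "(perm_a c (4*k) \<circ> perm_a c (4*k)) x = id x"
      using i perm_a_val[OF ci k(1)] tau_tau[OF k(1)] by simp
  qed
  show "perm_b c k ^^ (2*k) = id"
  proof
    fix x obtain t where t: "t < 2*k" "x = c (L1f k t) \<or> x = c (L2f k t)" using cov by blast
    show "(perm_b c k ^^ (2*k)) x = id x" using t B_pow[OF k ci t(1), of "2*k"] by auto
  qed
  have B1: "perm_b c k (c (L1f k t)) = c (L1f k (sucm k t))"
    "perm_b c k (c (L2f k t)) = c (L2f k (sucm k t))" if "t < 2*k" for t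
    using B_pow[OF k ci that, of 1] sucm_eq[OF that] by simp_all
  show "perm_a c (4*k) \<circ> perm_b c k = perm_b c k ^^ (k-1) \<circ> perm_a c (4*k)"
  proof
    fix x obtain t where t: "t < 2*k" "x = c (L1f k t) \<or> x = c (L2f k t)" using cov by blast
    have st: "sucm k t < 2*k" using t unfolding sucm_def by auto
    show "(perm_a c (4*k) \<circ> perm_b c k) x = (perm_b c k ^^ (k-1) \<circ> perm_a c (4*k)) x"
    proof (cases "x = c (L1f k t)")
      case True
      note r = rel1[OF k t(1)]
      have "(perm_a c (4*k) \<circ> perm_b c k) x = c (tau (L1f k (sucm k t)))"
        using True B1(1)[OF t(1)] perm_a_val[OF ci k(1)] L_bound[OF k st] by simp
      also have "\<dots> = c (L2f k (shm k (p1 k t)))" using r by simp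
      also have "\<dots> = (perm_b c k ^^ (k-1)) (c (L2f k (p1 k t)))"
        using B_pow(2)[OF k ci, of "p1 k t" "k-1"] r shm_eq[OF k1, of "p1 k t"] by simp
      also have "\<dots> = (perm_b c k ^^ (k-1) \<circ> perm_a c (4*k)) x"
        using True perm_a_val[OF ci k(1)] L_bound[OF k t(1)] r by simp
      finally show ?thesis .
    next
      case False
      then have x2: "x = c (L2f k t)" using t by blast
      note r = rel2[OF k t(1)]
      have "(perm_a c (4*k) \<circ> perm_b c k) x = c (tau (L2f k (sucm k t)))"
        using x2 B1(2)[OF t(1)] perm_a_val[OF ci k(1)] L_bound[OF k st] by simp
      also have "\<dots> = c (L1f k (shm k (p2 k t)))" using r by simp
      also have "\<dots> = (perm_b c k ^^ (k-1)) (c (L1f k (p2 k t)))"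
        using B_pow(1)[OF k ci, of "p2 k t" "k-1"] r shm_eq[OF k1, of "p2 k t"] by simp
      also have "\<dots> = (perm_b c k ^^ (k-1) \<circ> perm_a c (4*k)) x"
        using x2 perm_a_val[OF ci k(1)] L_bound[OF k t(1)] r by simp
      finally show ?thesis .
    qed
  qed
qed


theorem theorem4p10:
  fixes f :: "'a::{field,finite} \<Rightarrow> 'a \<Rightarrow> 'a"
    and c :: "nat \<Rightarrow> 'a"
    and \<beta> :: "('a \<Rightarrow> 'a) list"
    and l k q :: nat
  assumes "l \<ge> 2" and "k = 2 ^ l" and "q = 4 * k"
    and "card (UNIV :: 'a set) = q"
    and "bij_betw c {..<q} UNIV"
    and "is_LPP f"
    and "ppt_of c q f \<beta>"
    and "set \<beta> = G3 c k"
  shows "has_companion f"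
proof -
  note as = assms
  define h where "h = (2::nat)^(l-1)"
  have kl: "k = 2^l" "l \<ge> 1" using as by auto
  have "(2::nat)^l = 2 * 2^(l-1)" using kl(2) by (metis Suc_diff_1 less_le_trans power_Suc zero_less_one)
  then have kh: "k = 2*h" using kl h_def by simp
  have "(2::nat)^1 \<le> 2^(l-1)" using as(1) by (intro power_increasing) auto
  then have h2: "h \<ge> 2" using h_def by simp
  note k2 = kh h2
  have c: "bij_betw c {..<4*k} UNIV" using as by simp
  note R = relations[OF k2 c]
  define A where "A = perm_a c (4*k)"
  define B where "B = perm_b c k"
  define M where "M = sdM A B"
  define G where "G = sdG k"
  have RA: "A \<circ> A = id" "B^^(2*k) = id" "A \<circ> B = B^^(k-1) \<circ> A" using R A_def B_def by auto
  have k1: "k \<ge> 1" using k2 by simp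
  have G3eq: "G3 c k = M ` G"
  proof -
    have "G3 c k = {(B ^^ j) \<circ> (A ^^ i) | j i. j < 2*k \<and> i < 2}"
    proof -
      have r1: "(j \<le> 2*k - 1) = (j < 2*k)" for j using k1 by auto
      have r2: "(i \<le> 1) = (i < (2::nat))" for i by auto
      show ?thesis unfolding G3_def A_def B_def r1 r2 by (rule refl)
    qed
    also have "\<dots> = M ` G" unfolding M_def G_def sdM_def sdG_def by force
    finally show ?thesis .
  qed
  have lenb: "length \<beta> = 4*k" and bijb: "\<And>i. i < 4*k \<Longrightarrow> bij (\<beta>!i)"
    and fpf: "\<And>i j x. i < 4*k \<Longrightarrow> j < 4*k \<Longrightarrow> i \<noteq> j \<Longrightarrow> (inv (\<beta>!i) \<circ> (\<beta>!j)) x \<noteq> x"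
    and fb: "\<And>i x. i < 4*k \<Longrightarrow> f x ((\<beta>!i) x) = c i"
    using as(7) as(3) unfolding ppt_of_def is_ppt_def by auto
  have neq: "(\<beta>!j) x \<noteq> (\<beta>!i) x" if "i < 4*k" "j < 4*k" "i \<noteq> j" for i j x
  proof
    assume "(\<beta>!j) x = (\<beta>!i) x"
    then have "(inv (\<beta>!i) \<circ> (\<beta>!j)) x = x" using bijb[OF that(1)] by (simp add: bij_is_inj)
    then show False using fpf that by blast
  qed
  have dist: "distinct \<beta>"
    unfolding distinct_conv_nth using neq lenb by metis
  have cardb: "card (set \<beta>) = 4*k" using distinct_card[OF dist] lenb by simp
  have cardG: "card G = 4*k" unfolding G_def sdG_def by (simp add: card_cartesian_product)
  have finG: "finite G" unfolding G_def sdG_def by simp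
  have injM: "inj_on M G"
    using eq_card_imp_inj_on[OF finG] cardb cardG G3eq as(8) by simp
  have idx: "\<exists>i<4*k. \<beta>!i = M s" if "s \<in> G" for s
  proof -
    have "M s \<in> set \<beta>" using that G3eq as(8) by simp
    then show ?thesis using lenb by (metis in_set_conv_nth)
  qed
  have cardU: "card (UNIV :: 'a set) = 4*k" using as by simp
  have reg: "bij_betw (\<lambda>s. M s x) G UNIV" for x
  proof -
    have inj: "inj_on (\<lambda>s. M s x) G"
    proof (rule inj_onI)
      fix s s' assume s: "s \<in> G" "s' \<in> G" and e: "M s x = M s' x"
      obtain i where i: "i < 4*k" "\<beta>!i = M s" using idx[OF s(1)] by blast
      obtain j where j: "j < 4*k" "\<beta>!j = M s'" using idx[OF s(2)] by blast
      have "i = j" using neq[OF i(1) j(1)] e i j by metis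
      then have "M s = M s'" using i j by simp
      then show "s = s'" using injM s by (meson inj_onD)
    qed
    have "card ((\<lambda>s. M s x) ` G) = card (UNIV :: 'a set)" using card_image[OF inj] cardG cardU by simp
    then have "(\<lambda>s. M s x) ` G = UNIV" by (metis card_subset_eq finite_UNIV subset_UNIV)
    then show ?thesis using inj by (simp add: bij_betw_def)
  qed
  have bijA: "bij A" using RA(1) by (metis o_bij)
  have "B \<circ> B^^(2*k-1) = id" "B^^(2*k-1) \<circ> B = id"
    using RA(2) k1 by (metis Suc_diff_1 funpow.simps(2) funpow_Suc_right mult_pos_pos zero_less_numeral less_le_trans zero_less_one)+
  then have bijB: "bij B" by (metis o_bij)
  have injMs: "inj (M s)" for s
    unfolding M_def sdM_def using bijA bijB by (simp add: bij_is_inj bij_comp)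
  have cl: "sd_mul k s t \<in> G \<and> M (sd_mul k s t) = M s \<circ> M t" if "s \<in> G" "t \<in> G" for s t
    using sd_mul_G[OF k1] sd_closure[OF RA that[unfolded G_def]] M_def G_def by simp
  have fval: "f x (M s x) = f x' (M s x')" if sG: "s \<in> G" for s x x'
  proof -
    obtain i where i: "i < 4*k" "\<beta>!i = M s" using idx[OF sG] by blast
    show ?thesis using fb[OF i(1)] i(2) by metis
  qed
  show ?thesis
    apply (rule abstract_companion[where M=M and G=G and mul="sd_mul k" and \<theta>="sd_th k"])
    using as(6) apply simp
    using reg apply simp
    using injMs apply simp
    using cl apply simp
    using fval apply simp
    using sd_th_G[OF k1] G_def apply simp
    using sd_th_inj[OF k1] G_def apply simp
    using sd_orth[OF kl] G_def apply blast
    done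
qed


end
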